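(* Let $n\ge2$, $s>\frac n2-1$ and $\max\{\frac38,\frac18n+\frac14-\frac14s\}<b'<\frac12$. Then there is a constant $C$ such that for all $(\xi,\tau)\in\mathbb{R}^{n}\times\mathbb{R}$, $$\Theta_1(\xi,\tau)=\int_{\mathbb{R}^{n+1}}\frac{\chi_{\{|\xi|\ge|\zeta|\}}(\zeta)\,(1+|\zeta|)^{-2s}}{(1+|\tau_1+\zeta^2|)^{2b'}(1+|\tau+\tau_1+(\xi+\zeta)^2|)^{2b'}}d\tau_1d\zeta\le C.$$
   Context: $\zeta\in\mathbb{R}^n$, $\tau_1\in\mathbb{R}$; $\zeta^2=|\zeta|^2$ and $(\xi+\zeta)^2=|\xi+\zeta|^2$; $\chi$ denotes a characteristic function. *)

theory Defs
  imports "HOL-Analysis.Analysis"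
begin

definition Theta1 :: "real \<Rightarrow> real \<Rightarrow> real ^ 'n \<Rightarrow> real \<Rightarrow> ennreal" where
  "Theta1 s b' \<xi> \<tau> =
     (\<integral>\<^sup>+ p. (case p of (\<zeta>, \<tau>\<^sub>1) \<Rightarrow>
        ennreal (indicator {\<zeta>'. norm \<zeta>' \<le> norm \<xi>} \<zeta> * (1 + norm \<zeta>) powr (- 2 * s)
          / ((1 + \<bar>\<tau>\<^sub>1 + (norm \<zeta>)\<^sup>2\<bar>) powr (2 * b')
             * (1 + \<bar>\<tau> + \<tau>\<^sub>1 + (norm (\<xi> + \<zeta>))\<^sup>2\<bar>) powr (2 * b'))))
      \<partial>(lborel :: ((real ^ 'n) \<times> real) measure))"

end

theory Submission
  imports Defs "HOL-Real_Asymp.Real_Asymp"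
begin


lemma meas_test:
  fixes \<xi> :: "real^'n" and \<tau> s b' :: real
  shows "(\<lambda>p. case p of (\<zeta>, \<tau>\<^sub>1) \<Rightarrow>
        ennreal (indicator {\<zeta>'. norm \<zeta>' \<le> norm \<xi>} \<zeta> * (1 + norm \<zeta>) powr (- 2 * s)
          / ((1 + \<bar>\<tau>\<^sub>1 + (norm \<zeta>)\<^sup>2\<bar>) powr (2 * b')
             * (1 + \<bar>\<tau> + \<tau>\<^sub>1 + (norm (\<xi> + \<zeta>))\<^sup>2\<bar>) powr (2 * b')))) \<in> borel_measurable (lborel \<Otimes>\<^sub>M lborel)"
  by measurable

lemma d1: "0 \<le> x \<Longrightarrow> 0 < (q::real) \<Longrightarrow> ((\<lambda>x. - ((1 + x) powr (-q) / q)) has_real_derivative (1 + x) powr (-(1+q))) (at x)"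
  apply (rule derivative_eq_intros refl | simp)+
  apply (rule arg_cong[where f="\<lambda>e. (1+x) powr e"])
  apply simp
  done
lemma d2: "0 \<le> x \<Longrightarrow> 0 < (q::real) \<Longrightarrow> ((\<lambda>x. ((1 + x) powr q / q)) has_real_derivative (1 + x) powr (q-1)) (at x)"
  apply (rule derivative_eq_intros refl | simp)+
  done

lemma int_tail_half:
  fixes q :: real assumes q: "q > 0"
  shows "(\<integral>\<^sup>+x. ennreal ((1 + \<bar>x\<bar>) powr (-(1+q))) * indicator {0..} x \<partial>lborel) = ennreal (1/q)"
proof -
  have "(\<integral>\<^sup>+x. ennreal ((1 + \<bar>x\<bar>) powr (-(1+q))) * indicator {0..} x \<partial>lborel)
      = (\<integral>\<^sup>+x. ennreal ((1 + x) powr (-(1+q))) * indicator {0..} x \<partial>lborel)"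
    by (intro nn_integral_cong) (auto split: split_indicator)
  also have "\<dots> = ennreal (0 - (- ((1 + 0) powr (-q) / q)))"
  proof (rule nn_integral_FTC_atLeast)
    show "(\<lambda>x::real. (1 + x) powr (-(1+q))) \<in> borel_measurable borel" by measurable
    fix x :: real assume x: "0 \<le> x"
    show "((\<lambda>x. - ((1 + x) powr (-q) / q)) has_real_derivative (1 + x) powr (-(1+q))) (at x)"
      using x q
      by (rule d1)
    show "0 \<le> (1 + x) powr (-(1+q))" by simp
  next
    show "((\<lambda>x::real. - ((1 + x) powr (-q) / q)) \<longlongrightarrow> 0) at_top"
      using q by real_asymp
  qed
  also have "\<dots> = ennreal (1/q)" by simp
  finally show ?thesis .
qed

lemma nn_int_even_split:
  fixes g :: "real \<Rightarrow> real"
  assumes [measurable]: "g \<in> borel_measurable borel" and ev: "\<And>x. g (-x) = g x"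
  shows "(\<integral>\<^sup>+x. ennreal (g x) \<partial>lborel) \<le> 2 * (\<integral>\<^sup>+x. ennreal (g x) * indicator {0..} x \<partial>lborel)"
proof -
  have "(\<integral>\<^sup>+x. ennreal (g x) \<partial>lborel) \<le> (\<integral>\<^sup>+x. ennreal (g x) * indicator {0..} x + ennreal (g x) * indicator {..0} x \<partial>lborel)"
    by (intro nn_integral_mono) (auto split: split_indicator)
  also have "\<dots> = (\<integral>\<^sup>+x. ennreal (g x) * indicator {0..} x \<partial>lborel) + (\<integral>\<^sup>+x. ennreal (g x) * indicator {..0} x \<partial>lborel)"
    by (intro nn_integral_add) auto
  also have "(\<integral>\<^sup>+x. ennreal (g x) * indicator {..0} x \<partial>lborel) = (\<integral>\<^sup>+x. ennreal (g (0 + (-1) * x)) * indicator {..0} (0 + (-1) * x) \<partial>lborel)"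
    using nn_integral_real_affine[of "\<lambda>x. ennreal (g x) * indicator {..0} x" "-1" 0] by simp
  also have "\<dots> = (\<integral>\<^sup>+x. ennreal (g x) * indicator {0..} x \<partial>lborel)"
    by (auto intro!: nn_integral_cong simp: ev split: split_indicator)
  finally show ?thesis by (simp add: mult_2)
qed

lemma int_tail_full:
  fixes q a :: real assumes q: "q > 0"
  shows "(\<integral>\<^sup>+x. ennreal ((1 + \<bar>x + a\<bar>) powr (-(1+q))) \<partial>lborel) \<le> ennreal (2/q)"
proof -
  have "(\<integral>\<^sup>+x. ennreal ((1 + \<bar>x\<bar>) powr (-(1+q))) \<partial>lborel) = (\<integral>\<^sup>+x. ennreal ((1 + \<bar>a + 1 * x\<bar>) powr (-(1+q))) \<partial>lborel)"
    using nn_integral_real_affine[of "\<lambda>x. ennreal ((1 + \<bar>x\<bar>) powr (-(1+q)))" 1 a] by simp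
  then have "(\<integral>\<^sup>+x. ennreal ((1 + \<bar>x + a\<bar>) powr (-(1+q))) \<partial>lborel) = (\<integral>\<^sup>+x. ennreal ((1 + \<bar>x\<bar>) powr (-(1+q))) \<partial>lborel)"
    by (simp add: add.commute)
  also have "\<dots> \<le> 2 * (\<integral>\<^sup>+x. ennreal ((1 + \<bar>x\<bar>) powr (-(1+q))) * indicator {0..} x \<partial>lborel)"
    by (rule nn_int_even_split[of "\<lambda>x. (1 + \<bar>x\<bar>) powr (-(1+q))"]) auto
  also have "\<dots> = 2 * ennreal (1/q)" using int_tail_half[OF q] by simp
  also have "\<dots> = ennreal (2/q)" using q by (subst ennreal_numeral[symmetric], subst ennreal_mult[symmetric]) auto
  finally show ?thesis .
qed

lemma int_Icc_pos:
  fixes p q L :: real assumes q: "q > 0" "1 - p \<le> q" and L: "0 \<le> L"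
  shows "(\<integral>\<^sup>+x. ennreal ((1 + \<bar>x\<bar>) powr (-p)) * indicator {0..L} x \<partial>lborel) \<le> ennreal ((1+L) powr q / q)"
proof -
  have "(\<integral>\<^sup>+x. ennreal ((1 + \<bar>x\<bar>) powr (-p)) * indicator {0..L} x \<partial>lborel)
      \<le> (\<integral>\<^sup>+x. ennreal ((1 + x) powr (q - 1)) * indicator {0..L} x \<partial>lborel)"
    using q by (intro nn_integral_mono) (auto split: split_indicator intro!: ennreal_leI powr_mono)
  also have "\<dots> = ennreal ((1+L) powr q / q - (1+0) powr q / q)"
  proof (rule nn_integral_FTC_Icc)
    show "(\<lambda>x::real. (1 + x) powr (q - 1)) \<in> borel_measurable borel" by measurable
    fix x :: real assume x: "x \<in> {0..L}"
    show "((\<lambda>x. (1 + x) powr q / q) has_real_derivative (1 + x) powr (q - 1)) (at x)"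
      using x q
      using x q by (intro d2) auto
    show "0 \<le> (1 + x) powr (q - 1)" by simp
  qed (use L in auto)
  also have "\<dots> \<le> ennreal ((1+L) powr q / q)" using q by (intro ennreal_leI) auto
  finally show ?thesis .
qed

lemma int_Icc_sym:
  fixes p q L :: real assumes q: "q > 0" "1 - p \<le> q" and L: "0 \<le> L"
  shows "(\<integral>\<^sup>+x. ennreal ((1 + \<bar>x\<bar>) powr (-p)) * indicator {-L..L} x \<partial>lborel) \<le> ennreal (2 * (1+L) powr q / q)"
proof -
  let ?g = "\<lambda>x. (1 + \<bar>x\<bar>) powr (-p) * indicator {-L..L} x"
  have "(\<integral>\<^sup>+x. ennreal ((1 + \<bar>x\<bar>) powr (-p)) * indicator {-L..L} x \<partial>lborel) = (\<integral>\<^sup>+x. ennreal (?g x) \<partial>lborel)"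
    by (intro nn_integral_cong) (auto split: split_indicator)
  also have "\<dots> \<le> 2 * (\<integral>\<^sup>+x. ennreal (?g x) * indicator {0..} x \<partial>lborel)"
    by (rule nn_int_even_split) (auto split: split_indicator)
  also have "(\<integral>\<^sup>+x. ennreal (?g x) * indicator {0..} x \<partial>lborel) = (\<integral>\<^sup>+x. ennreal ((1 + \<bar>x\<bar>) powr (-p)) * indicator {0..L} x \<partial>lborel)"
    by (intro nn_integral_cong) (auto split: split_indicator)
  also have "2 * \<dots> \<le> 2 * ennreal ((1+L) powr q / q)"
    by (intro mult_left_mono int_Icc_pos q L) auto
  also have "\<dots> = ennreal (2 * (1+L) powr q / q)" using q by (subst ennreal_numeral[symmetric], subst ennreal_mult[symmetric]) auto
  finally show ?thesis .
qed



lemma pw_half: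
  fixes A B D \<alpha> \<beta> \<epsilon> :: real
  assumes A: "1 \<le> A" and AB: "A \<le> B" and D: "1 + D \<le> A + B" "0 \<le> D"
    and al: "0 \<le> \<alpha>" and ab: "\<alpha> = 2*\<beta> - 1 - \<epsilon>" and be: "\<beta> < 1 + \<epsilon>"
  shows "1 / (A powr \<beta> * B powr \<beta>) \<le> 2 powr \<alpha> * (1 + D) powr (-\<alpha>) * (A powr (-(1+\<epsilon>)) + B powr (-(1+\<epsilon>)))"
proof -
  define \<delta> where "\<delta> = \<beta> - \<alpha>"
  have dpos: "0 < \<delta>" using ab be by (simp add: \<delta>_def)
  have B0: "0 < B" using A AB by simp
  have A0: "0 < A" using A by simp
  have e1: "1 / (A powr \<beta> * B powr \<beta>) = A powr (-\<beta>) * (B powr (-\<alpha>) * B powr (-\<delta>))"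
    by (simp add: powr_minus divide_simps \<delta>_def powr_add[symmetric] flip: powr_add)
  have "B powr (-\<alpha>) \<le> ((1 + D) / 2) powr (-\<alpha>)"
    using D AB al by (intro powr_mono2') auto
  also have "((1 + D) / 2) powr (-\<alpha>) = 2 powr \<alpha> * (1 + D) powr (-\<alpha>)"
    using D by (simp add: powr_divide powr_minus divide_simps)
  finally have e2: "B powr (-\<alpha>) \<le> 2 powr \<alpha> * (1 + D) powr (-\<alpha>)" .
  have e3: "B powr (-\<delta>) \<le> A powr (-\<delta>)"
    using dpos AB A0 by (intro powr_mono2') auto
  have e4: "A powr (-\<beta>) * (B powr (-\<alpha>) * B powr (-\<delta>)) \<le> A powr (-\<beta>) * ((2 powr \<alpha> * (1 + D) powr (-\<alpha>)) * A powr (-\<delta>))"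
    using e2 e3 by (intro mult_left_mono mult_mono) auto
  have e5: "A powr (-\<beta>) * A powr (-\<delta>) = A powr (-(1+\<epsilon>))"
    by (simp add: powr_add[symmetric] \<delta>_def ab)
  have e6: "A powr (-\<beta>) * ((2 powr \<alpha> * (1 + D) powr (-\<alpha>)) * A powr (-\<delta>)) = 2 powr \<alpha> * (1 + D) powr (-\<alpha>) * A powr (-(1+\<epsilon>))"
    using e5 by (simp add: algebra_simps)
  have e7: "2 powr \<alpha> * (1 + D) powr (-\<alpha>) * A powr (-(1+\<epsilon>)) \<le> 2 powr \<alpha> * (1 + D) powr (-\<alpha>) * (A powr (-(1+\<epsilon>)) + B powr (-(1+\<epsilon>)))"
    by (intro mult_left_mono) auto
  show ?thesis using e1 e4 e6 e7 by linarith
qed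

lemma pw_tau:
  fixes A B D \<alpha> \<beta> \<epsilon> :: real
  assumes A: "1 \<le> A" and B: "1 \<le> B" and D: "1 + D \<le> A + B" "0 \<le> D"
    and al: "0 \<le> \<alpha>" and ab: "\<alpha> = 2*\<beta> - 1 - \<epsilon>" and be: "\<beta> < 1 + \<epsilon>"
  shows "1 / (A powr \<beta> * B powr \<beta>) \<le> 2 powr \<alpha> * (1 + D) powr (-\<alpha>) * (A powr (-(1+\<epsilon>)) + B powr (-(1+\<epsilon>)))"
proof (cases "A \<le> B")
  case True show ?thesis using pw_half[OF A True D al ab be] by simp
next
  case False
  then have "B \<le> A" by simp
  from pw_half[OF B this _ D(2) al ab be] D show ?thesis by (simp add: ac_simps)
qed

lemma int_tau:
  fixes X a0 c0 \<alpha> \<beta> \<epsilon> :: real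
  assumes X: "0 \<le> X" and al: "0 \<le> \<alpha>" and ab: "\<alpha> = 2*\<beta> - 1 - \<epsilon>" and be: "\<beta> < 1 + \<epsilon>" and ep: "0 < \<epsilon>"
  shows "(\<integral>\<^sup>+t. ennreal (X / ((1 + \<bar>t + a0\<bar>) powr \<beta> * (1 + \<bar>t + c0\<bar>) powr \<beta>)) \<partial>lborel)
    \<le> ennreal (X * 2 powr \<alpha> * (1 + \<bar>a0 - c0\<bar>) powr (-\<alpha>) * (4/\<epsilon>))"
proof -
  define K where "K = X * 2 powr \<alpha> * (1 + \<bar>a0 - c0\<bar>) powr (-\<alpha>)"
  have K: "0 \<le> K" using X by (simp add: K_def)
  have "(\<integral>\<^sup>+t. ennreal (X / ((1 + \<bar>t + a0\<bar>) powr \<beta> * (1 + \<bar>t + c0\<bar>) powr \<beta>)) \<partial>lborel)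
     \<le> (\<integral>\<^sup>+t. ennreal K * ennreal ((1 + \<bar>t + a0\<bar>) powr (-(1+\<epsilon>))) + ennreal K * ennreal ((1 + \<bar>t + c0\<bar>) powr (-(1+\<epsilon>))) \<partial>lborel)"
  proof (intro nn_integral_mono)
    fix t :: real
    have "1 / ((1 + \<bar>t + a0\<bar>) powr \<beta> * (1 + \<bar>t + c0\<bar>) powr \<beta>) \<le> 2 powr \<alpha> * (1 + \<bar>a0 - c0\<bar>) powr (-\<alpha>) * ((1 + \<bar>t + a0\<bar>) powr (-(1+\<epsilon>)) + (1 + \<bar>t + c0\<bar>) powr (-(1+\<epsilon>)))"
      by (rule pw_tau[OF _ _ _ _ al ab be]) auto
    then have "X * (1 / ((1 + \<bar>t + a0\<bar>) powr \<beta> * (1 + \<bar>t + c0\<bar>) powr \<beta>)) \<le> X * (2 powr \<alpha> * (1 + \<bar>a0 - c0\<bar>) powr (-\<alpha>) * ((1 + \<bar>t + a0\<bar>) powr (-(1+\<epsilon>)) + (1 + \<bar>t + c0\<bar>) powr (-(1+\<epsilon>))))"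
      by (rule mult_left_mono[OF _ X])
    then have "X / ((1 + \<bar>t + a0\<bar>) powr \<beta> * (1 + \<bar>t + c0\<bar>) powr \<beta>) \<le> K * (1 + \<bar>t + a0\<bar>) powr (-(1+\<epsilon>)) + K * (1 + \<bar>t + c0\<bar>) powr (-(1+\<epsilon>))"
      by (simp add: K_def algebra_simps)
    then show "ennreal (X / ((1 + \<bar>t + a0\<bar>) powr \<beta> * (1 + \<bar>t + c0\<bar>) powr \<beta>)) \<le> ennreal K * ennreal ((1 + \<bar>t + a0\<bar>) powr (-(1+\<epsilon>))) + ennreal K * ennreal ((1 + \<bar>t + c0\<bar>) powr (-(1+\<epsilon>)))"
      using K by (simp add: ennreal_mult[symmetric] ennreal_plus[symmetric] del: ennreal_plus)
  qed
  also have "\<dots> = ennreal K * (\<integral>\<^sup>+t. ennreal ((1 + \<bar>t + a0\<bar>) powr (-(1+\<epsilon>))) \<partial>lborel) + ennreal K * (\<integral>\<^sup>+t. ennreal ((1 + \<bar>t + c0\<bar>) powr (-(1+\<epsilon>))) \<partial>lborel)"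
    by (simp add: nn_integral_add nn_integral_cmult)
  also have "\<dots> \<le> ennreal K * ennreal (2/\<epsilon>) + ennreal K * ennreal (2/\<epsilon>)"
    by (intro add_mono mult_left_mono int_tail_full ep) auto
  also have "\<dots> = ennreal (X * 2 powr \<alpha> * (1 + \<bar>a0 - c0\<bar>) powr (-\<alpha>) * (4/\<epsilon>))"
    using K ep by (simp add: K_def ennreal_mult[symmetric] ennreal_plus[symmetric] del: ennreal_plus)
  finally show ?thesis .
qed

lemma int_coupling:
  fixes a c N \<alpha> :: real
  assumes a: "a \<noteq> 0" and N: "0 \<le> N" and al: "0 < \<alpha>" "\<alpha> < 1"
  shows "(\<integral>\<^sup>+y. ennreal ((1 + \<bar>c + a * y\<bar>) powr (-\<alpha>)) * indicator {-N..N} y \<partial>lborel)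
    \<le> ennreal (2 * (1 + 2*\<bar>a\<bar>*N) powr (1-\<alpha>) / ((1-\<alpha>) * \<bar>a\<bar>) + 2*N * (1 + 2*\<bar>a\<bar>*N) powr (-\<alpha>))"
proof -
  define R where "R = 2*\<bar>a\<bar>*N"
  have R: "0 \<le> R" using N by (simp add: R_def)
  let ?h = "\<lambda>z. ennreal ((1 + \<bar>z\<bar>) powr (-\<alpha>)) * indicator {-R..R} z"
  have S1: "(\<integral>\<^sup>+y. ennreal ((1 + \<bar>c + a * y\<bar>) powr (-\<alpha>)) * indicator {-N..N} y \<partial>lborel)
     \<le> (\<integral>\<^sup>+y. ?h (c + a * y) + ennreal ((1 + R) powr (-\<alpha>)) * indicator {-N..N} y \<partial>lborel)"
  proof (intro nn_integral_mono)
    fix y :: real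
    show "ennreal ((1 + \<bar>c + a * y\<bar>) powr (-\<alpha>)) * indicator {-N..N} y \<le> ?h (c + a * y) + ennreal ((1 + R) powr (-\<alpha>)) * indicator {-N..N} y"
    proof (cases "\<bar>c + a * y\<bar> \<le> R")
      case True then show ?thesis by (auto split: split_indicator)
    next
      case False
      then have "(1 + \<bar>c + a * y\<bar>) powr (-\<alpha>) \<le> (1 + R) powr (-\<alpha>)"
        using R al by (intro powr_mono2') auto
      then show ?thesis by (auto split: split_indicator intro: ennreal_leI)
    qed
  qed
  have S2: "(\<integral>\<^sup>+y. ?h (c + a * y) + ennreal ((1 + R) powr (-\<alpha>)) * indicator {-N..N} y \<partial>lborel) = (\<integral>\<^sup>+y. ?h (c + a * y) \<partial>lborel) + ennreal ((1 + R) powr (-\<alpha>)) * (2*N)"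
    using N by (subst nn_integral_add) (auto simp: nn_integral_cmult_indicator)
  have S3: "(\<integral>\<^sup>+y. ?h (c + a * y) \<partial>lborel) = ennreal (1/\<bar>a\<bar>) * (\<integral>\<^sup>+z. ?h z \<partial>lborel)"
  proof -
    have "(\<integral>\<^sup>+z. ?h z \<partial>lborel) = ennreal \<bar>a\<bar> * (\<integral>\<^sup>+y. ?h (c + a * y) \<partial>lborel)"
      using nn_integral_real_affine[of ?h a c] a by simp
    then have "ennreal (1/\<bar>a\<bar>) * (\<integral>\<^sup>+z. ?h z \<partial>lborel) = (ennreal (1/\<bar>a\<bar>) * ennreal \<bar>a\<bar>) * (\<integral>\<^sup>+y. ?h (c + a * y) \<partial>lborel)"
      by (simp add: mult.assoc)
    also have "ennreal (1/\<bar>a\<bar>) * ennreal \<bar>a\<bar> = 1"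
      using a by (simp add: ennreal_mult[symmetric])
    finally show ?thesis by simp
  qed
  have S4: "(\<integral>\<^sup>+z. ?h z \<partial>lborel) \<le> ennreal (2 * (1+R) powr (1-\<alpha>) / (1-\<alpha>))"
    using al R by (intro int_Icc_sym) auto
  have "(\<integral>\<^sup>+y. ennreal ((1 + \<bar>c + a * y\<bar>) powr (-\<alpha>)) * indicator {-N..N} y \<partial>lborel)
     \<le> (\<integral>\<^sup>+y. ?h (c + a * y) \<partial>lborel) + ennreal ((1 + R) powr (-\<alpha>)) * (2*N)"
    using S1 S2 by simp
  also have "\<dots> \<le> ennreal (1/\<bar>a\<bar>) * ennreal (2 * (1+R) powr (1-\<alpha>) / (1-\<alpha>)) + ennreal ((1 + R) powr (-\<alpha>)) * (2*N)"
    unfolding S3 by (intro add_right_mono mult_left_mono S4) auto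
  also have "\<dots> = ennreal (2 * (1 + 2*\<bar>a\<bar>*N) powr (1-\<alpha>) / ((1-\<alpha>) * \<bar>a\<bar>) + 2*N * (1 + 2*\<bar>a\<bar>*N) powr (-\<alpha>))"
    using al N R by (simp add: R_def ennreal_mult[symmetric] ennreal_plus[symmetric] mult.commute del: ennreal_plus)
  finally show ?thesis .
qed



lemma norm_prod_bound:
  fixes \<zeta> :: "'a::euclidean_space" and k :: 'a
  assumes k: "k \<in> Basis" and p: "0 \<le> p" and ps: "p * (real DIM('a) - 1) = 2 * s"
  shows "(1 + norm \<zeta>) powr (- 2 * s) \<le> (\<Prod>b\<in>Basis-{k}. (1 + \<bar>\<zeta> \<bullet> b\<bar>) powr (-p))"
proof -
  have "(\<Prod>b\<in>Basis-{k}. (1 + norm \<zeta>) powr (-p)) \<le> (\<Prod>b\<in>Basis-{k}. (1 + \<bar>\<zeta> \<bullet> b\<bar>) powr (-p))"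
    using p by (intro prod_mono conjI powr_mono2') (auto simp: Basis_le_norm)
  moreover have "(\<Prod>b\<in>Basis-{k}. (1 + norm \<zeta>) powr (-p)) = ((1 + norm \<zeta>) powr (-p)) ^ (DIM('a) - 1)"
    using k by (simp add: card_Diff_singleton)
  moreover have "((1 + norm \<zeta>) powr (-p)) ^ (DIM('a) - 1) = (1 + norm \<zeta>) powr (-p * real (DIM('a) - 1))"
  proof -
    have "((1 + norm \<zeta>) powr (-p)) ^ (DIM('a) - 1) = ((1 + norm \<zeta>) powr (-p)) powr (real (DIM('a) - 1))"
    proof (rule powr_realpow[symmetric])
      have "0 < 1 + norm \<zeta>" by (simp add: add_pos_nonneg)
      then show "0 < (1 + norm \<zeta>) powr (-p)" by simp
    qed
    also have "\<dots> = (1 + norm \<zeta>) powr (-p * real (DIM('a) - 1))" by (rule powr_powr)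
    finally show ?thesis .
  qed
  moreover have "-p * real (DIM('a) - 1) = - 2 * s"
    using ps by (simp add: of_nat_diff)
  ultimately show ?thesis by simp
qed

lemma psf: "product_sigma_finite (\<lambda>_::'b. lborel::real measure)"
  by (simp add: product_sigma_finite_def lborel.sigma_finite_measure_axioms)

lemma meas_P1:
  shows "(\<lambda>x. (\<Prod>b\<in>Basis-{k}. ennreal (indicator {-N..N} (x b) * (1 + \<bar>x b\<bar>) powr (-p))))
    \<in> borel_measurable (Pi\<^sub>M (Basis::'a::euclidean_space set) (\<lambda>_. lborel))"
  by measurable
lemma meas_P2:
  fixes \<xi> :: "'a::euclidean_space"
  shows "(\<lambda>x. (\<Sum>b\<in>Basis. (\<xi> \<bullet> b) * x b))
    \<in> borel_measurable (Pi\<^sub>M Basis (\<lambda>_. lborel))"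
  by measurable
lemma meas_Psi:
  fixes \<xi> :: "'a::euclidean_space"
  assumes k: "k \<in> Basis"
  shows "(\<lambda>x. (\<Prod>b\<in>Basis-{k}. ennreal (indicator {-N..N} (x b) * (1 + \<bar>x b\<bar>) powr (-p))) *
      (ennreal ((1 + \<bar>c0 + 2 * (\<Sum>b\<in>Basis. (\<xi> \<bullet> b) * x b)\<bar>) powr (-\<alpha>)) * indicator {-N..N} (x k)))
    \<in> borel_measurable (Pi\<^sub>M Basis (\<lambda>_. lborel))"
proof (intro borel_measurable_times_ennreal meas_P1)
  have f: "(\<lambda>z::real. ennreal ((1 + \<bar>c0 + 2 * z\<bar>) powr (-\<alpha>))) \<in> borel_measurable borel" by measurable
  show "(\<lambda>x. ennreal ((1 + \<bar>c0 + 2 * (\<Sum>b\<in>Basis. (\<xi> \<bullet> b) * x b)\<bar>) powr (-\<alpha>))) \<in> borel_measurable (Pi\<^sub>M Basis (\<lambda>_. lborel))"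
    using measurable_compose[OF meas_P2 f] by (simp add: o_def)
  have g: "(\<lambda>z::real. indicator {-N..N} z :: ennreal) \<in> borel_measurable lborel" by measurable
  show "(\<lambda>x. indicator {-N..N} (x k) :: ennreal) \<in> borel_measurable (Pi\<^sub>M Basis (\<lambda>_. lborel))"
    using measurable_compose[OF measurable_component_singleton[OF k] g] by (simp add: o_def)
qed

lemma int_zeta:
  fixes \<xi> k :: "'a::euclidean_space" and N c0 s p \<alpha> J Q :: real
  assumes k: "k \<in> Basis" and p: "0 \<le> p" and ps: "p * (real DIM('a) - 1) = 2 * s"
    and J: "\<And>c. (\<integral>\<^sup>+y. ennreal ((1 + \<bar>c + 2*(\<xi> \<bullet> k) * y\<bar>) powr (-\<alpha>)) * indicator {-N..N} y \<partial>lborel) \<le> ennreal J"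
    and Q: "(\<integral>\<^sup>+y. ennreal ((1 + \<bar>y\<bar>) powr (-p)) * indicator {-N..N} y \<partial>lborel) \<le> ennreal Q"
  shows "(\<integral>\<^sup>+\<zeta>. ennreal (indicator {\<zeta>. norm \<zeta> \<le> N} \<zeta> * (1 + norm \<zeta>) powr (- 2 * s) * (1 + \<bar>c0 + 2 * (\<xi> \<bullet> \<zeta>)\<bar>) powr (-\<alpha>)) \<partial>lborel)
     \<le> ennreal J * ennreal Q ^ (DIM('a) - 1)"
proof -
  interpret P: product_sigma_finite "\<lambda>_::'a. lborel::real measure" by (rule psf)
  let ?\<Phi> = "\<lambda>\<zeta>::'a. ennreal (indicator {\<zeta>. norm \<zeta> \<le> N} \<zeta> * (1 + norm \<zeta>) powr (- 2 * s) * (1 + \<bar>c0 + 2 * (\<xi> \<bullet> \<zeta>)\<bar>) powr (-\<alpha>))"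
  let ?P = "\<lambda>x. (\<Prod>b\<in>Basis-{k}. ennreal (indicator {-N..N} (x b) * (1 + \<bar>x b\<bar>) powr (-p)))"
  let ?\<Psi> = "\<lambda>x. ?P x * (ennreal ((1 + \<bar>c0 + 2 * (\<Sum>b\<in>Basis. (\<xi> \<bullet> b) * x b)\<bar>) powr (-\<alpha>)) * indicator {-N..N} (x k))"
  have m\<Phi>: "?\<Phi> \<in> borel_measurable borel" by measurable
  have B: "insert k (Basis-{k}) = (Basis::'a set)" using k by auto
  have "(\<integral>\<^sup>+\<zeta>. ?\<Phi> \<zeta> \<partial>lborel) = (\<integral>\<^sup>+x. ?\<Phi> (\<Sum>b\<in>Basis. x b *\<^sub>R b) \<partial>(Pi\<^sub>M Basis (\<lambda>_. lborel)))"
    by (subst lborel_eq[where 'a='a]) (simp add: nn_integral_distr m\<Phi>)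
  also have "\<dots> \<le> (\<integral>\<^sup>+x. ?\<Psi> x \<partial>(Pi\<^sub>M Basis (\<lambda>_. lborel)))"
  proof (intro nn_integral_mono)
    fix x :: "'a \<Rightarrow> real"
    define \<zeta> where "\<zeta> = (\<Sum>b\<in>Basis. x b *\<^sub>R b)"
    have cz: "\<zeta> \<bullet> b = x b" if "b \<in> Basis" for b
      using that by (simp add: \<zeta>_def inner_sum_left inner_Basis if_distrib sum.delta cong: if_cong)
    have xz: "\<xi> \<bullet> \<zeta> = (\<Sum>b\<in>Basis. (\<xi> \<bullet> b) * x b)"
      by (simp add: \<zeta>_def inner_sum_right mult.commute)
    show "?\<Phi> (\<Sum>b\<in>Basis. x b *\<^sub>R b) \<le> ?\<Psi> x"
    proof (cases "norm \<zeta> \<le> N")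
      case False
      then have "?\<Phi> \<zeta> = 0" by simp
      then have "?\<Phi> (\<Sum>b\<in>Basis. x b *\<^sub>R b) = 0" by (simp only: \<zeta>_def)
      then show ?thesis by (simp only: zero_le)
    next
      case True
      have xb: "\<bar>x b\<bar> \<le> N" if "b \<in> Basis" for b
        using Basis_le_norm[OF that, of \<zeta>] cz[OF that] True by simp
      have "?P x = (\<Prod>b\<in>Basis-{k}. ennreal ((1 + \<bar>\<zeta> \<bullet> b\<bar>) powr (-p)))"
      proof (intro prod.cong refl)
        fix b assume b: "b \<in> Basis - {k}"
        then have "indicator {-N..N} (x b) = (1::real)" using xb[of b] by (simp add: indicator_def abs_le_iff)
        then show "ennreal (indicator {-N..N} (x b) * (1 + \<bar>x b\<bar>) powr (-p)) = ennreal ((1 + \<bar>\<zeta> \<bullet> b\<bar>) powr (-p))"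
          using cz[of b] b by simp
      qed
      also have "\<dots> = ennreal (\<Prod>b\<in>Basis-{k}. (1 + \<bar>\<zeta> \<bullet> b\<bar>) powr (-p))"
        by (rule prod_ennreal) simp
      finally have "?P x = ennreal (\<Prod>b\<in>Basis-{k}. (1 + \<bar>\<zeta> \<bullet> b\<bar>) powr (-p))" .
      moreover have "indicator {-N..N} (x k) = (1::ennreal)"
        using xb[OF k] by (simp add: indicator_def abs_le_iff)
      moreover have "(1 + norm \<zeta>) powr (- 2 * s) * (1 + \<bar>c0 + 2 * (\<xi> \<bullet> \<zeta>)\<bar>) powr (-\<alpha>) \<le> (\<Prod>b\<in>Basis-{k}. (1 + \<bar>\<zeta> \<bullet> b\<bar>) powr (-p)) * (1 + \<bar>c0 + 2 * (\<xi> \<bullet> \<zeta>)\<bar>) powr (-\<alpha>)"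
        by (intro mult_right_mono norm_prod_bound k p ps) auto
      ultimately have "?\<Phi> \<zeta> \<le> ?\<Psi> x"
        using True by (simp add: xz[symmetric] ennreal_mult''[symmetric] prod_nonneg)
      then show ?thesis unfolding \<zeta>_def .
    qed
  qed
  also have "(\<integral>\<^sup>+x. ?\<Psi> x \<partial>(Pi\<^sub>M Basis (\<lambda>_. lborel))) = (\<integral>\<^sup>+x. (\<integral>\<^sup>+y. ?\<Psi> (x(k := y)) \<partial>lborel) \<partial>(Pi\<^sub>M (Basis-{k}) (\<lambda>_. lborel)))"
  proof -
    have "integral\<^sup>N (Pi\<^sub>M (insert k (Basis-{k})) (\<lambda>_. lborel)) ?\<Psi> = (\<integral>\<^sup>+x. (\<integral>\<^sup>+y. ?\<Psi> (x(k := y)) \<partial>lborel) \<partial>(Pi\<^sub>M (Basis-{k}) (\<lambda>_. lborel)))"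
      by (rule P.product_nn_integral_insert) (simp_all only: B meas_Psi[OF k] finite_Diff finite_Basis Diff_iff singleton_iff simp_thms)
    then show ?thesis by (simp only: B)
  qed
  also have "\<dots> \<le> (\<integral>\<^sup>+x. ?P x * ennreal J \<partial>(Pi\<^sub>M (Basis-{k}) (\<lambda>_. lborel)))"
  proof (intro nn_integral_mono)
    fix x :: "'a \<Rightarrow> real"
    define c1 where "c1 = c0 + 2 * (\<Sum>b\<in>Basis-{k}. (\<xi> \<bullet> b) * x b)"
    have eq: "?\<Psi> (x(k := y)) = ?P x * (ennreal ((1 + \<bar>c1 + 2*(\<xi> \<bullet> k) * y\<bar>) powr (-\<alpha>)) * indicator {-N..N} y)" for y
    proof -
      have "(\<Sum>b\<in>Basis. (\<xi> \<bullet> b) * (x(k := y)) b) = (\<xi> \<bullet> k) * y + (\<Sum>b\<in>Basis-{k}. (\<xi> \<bullet> b) * x b)"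
        using k by (simp add: sum.remove[OF finite_Basis k])
      moreover have "?P (x(k := y)) = ?P x" by (intro prod.cong) auto
      ultimately show ?thesis by (simp add: c1_def algebra_simps)
    qed
    have "(\<integral>\<^sup>+y. ?\<Psi> (x(k := y)) \<partial>lborel) = ?P x * (\<integral>\<^sup>+y. ennreal ((1 + \<bar>c1 + 2*(\<xi> \<bullet> k) * y\<bar>) powr (-\<alpha>)) * indicator {-N..N} y \<partial>lborel)"
      unfolding eq by (rule nn_integral_cmult) measurable
    also have "\<dots> \<le> ?P x * ennreal J" by (intro mult_left_mono J) auto
    finally show "(\<integral>\<^sup>+y. ?\<Psi> (x(k := y)) \<partial>lborel) \<le> ?P x * ennreal J" .
  qed
  also have "\<dots> = ennreal J * (\<integral>\<^sup>+x. ?P x \<partial>(Pi\<^sub>M (Basis-{k}) (\<lambda>_. lborel)))"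
    by (subst nn_integral_multc) (use meas_P1 in \<open>auto simp: mult.commute\<close>)
  also have "(\<integral>\<^sup>+x. ?P x \<partial>(Pi\<^sub>M (Basis-{k}) (\<lambda>_. lborel))) = (\<Prod>b\<in>Basis-{k}. (\<integral>\<^sup>+y. ennreal (indicator {-N..N} y * (1 + \<bar>y\<bar>) powr (-p)) \<partial>lborel))"
    by (rule P.product_nn_integral_prod) auto
  also have "\<dots> = (\<integral>\<^sup>+y. ennreal ((1 + \<bar>y\<bar>) powr (-p)) * indicator {-N..N} y \<partial>lborel) ^ (DIM('a) - 1)"
    using k by (simp add: card_Diff_singleton mult.commute ennreal_mult' ennreal_indicator)
  also have "ennreal J * \<dots> \<le> ennreal J * ennreal Q ^ (DIM('a) - 1)"
    by (intro mult_left_mono power_mono Q) auto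
  finally show ?thesis .
qed



lemma JQ_bound:
  fixes N J q \<alpha> CJ :: real and n :: nat
  assumes N: "0 \<le> N" and q: "0 < q" and CJ: "0 \<le> CJ"
    and J1: "N \<le> 1 \<Longrightarrow> J \<le> 2" and J2: "1 < N \<Longrightarrow> J \<le> CJ * N powr (1 - 2*\<alpha>)"
    and J0: "0 \<le> J"
    and ex: "1 - 2*\<alpha> + q * real n \<le> 0"
  shows "J * (2 * (1+N) powr q / q) ^ n \<le> max 2 CJ * (2 * 2 powr q / q) ^ n"
proof (cases "N \<le> 1")
  case True
  have "(1+N) powr q \<le> 2 powr q" using True N q by (intro powr_mono2) auto
  then have "2 * (1+N) powr q / q \<le> 2 * 2 powr q / q" using q by (simp add: divide_right_mono)
  then have "(2 * (1+N) powr q / q) ^ n \<le> (2 * 2 powr q / q) ^ n" using q by (intro power_mono) auto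
  moreover have "J \<le> max 2 CJ" using J1[OF True] by simp
  ultimately show ?thesis using J0 q by (intro mult_mono) auto
next
  case False
  then have N1: "1 < N" by simp
  have "(1+N) powr q \<le> (2*N) powr q" using N1 q by (intro powr_mono2) auto
  also have "\<dots> = 2 powr q * N powr q" using N1 by (simp add: powr_mult)
  finally have "2 * (1+N) powr q / q \<le> (2 * 2 powr q / q) * N powr q" using q by (simp add: divide_right_mono field_simps)
  then have "(2 * (1+N) powr q / q) ^ n \<le> ((2 * 2 powr q / q) * N powr q) ^ n" using q by (intro power_mono) auto
  also have "\<dots> = (2 * 2 powr q / q) ^ n * N powr (q * real n)"
  proof -
    have "N powr (q * real n) = (N powr q) powr (real n)" by (simp add: powr_powr)
    also have "\<dots> = (N powr q) ^ n" using N1 by (intro powr_realpow) simp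
    moreover have "((2 * 2 powr q / q) * N powr q) ^ n = (2 * 2 powr q / q) ^ n * (N powr q) ^ n"
      by (rule power_mult_distrib)
    ultimately show ?thesis by simp
  qed
  finally have Q: "(2 * (1+N) powr q / q) ^ n \<le> (2 * 2 powr q / q) ^ n * N powr (q * real n)" .
  have "J * (2 * (1+N) powr q / q) ^ n \<le> (CJ * N powr (1 - 2*\<alpha>)) * ((2 * 2 powr q / q) ^ n * N powr (q * real n))"
    using J2[OF N1] Q J0 CJ q by (intro mult_mono) auto
  also have "\<dots> = CJ * (2 * 2 powr q / q) ^ n * N powr (1 - 2*\<alpha> + q * real n)"
    by (simp add: powr_add)
  also have "\<dots> \<le> CJ * (2 * 2 powr q / q) ^ n * 1"
  proof (intro mult_left_mono)
    show "N powr (1 - 2*\<alpha> + q * real n) \<le> 1"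
      using N1 ex powr_mono[of "1 - 2*\<alpha> + q * real n" 0 N] by simp
  qed (use CJ q in auto)
  also have "\<dots> \<le> max 2 CJ * (2 * 2 powr q / q) ^ n"
    using q by (simp add: mult_right_mono)
  finally show ?thesis .
qed



lemma powr_sq_helper:
  fixes c N e :: real assumes "0 \<le> c" "0 < N"
  shows "(c * N\<^sup>2) powr e = c powr e * N powr (2*e)"
proof -
  have "N\<^sup>2 = N powr 2" using assms(2) powr_realpow[of N 2] by simp
  then have "(c * N\<^sup>2) powr e = c powr e * (N powr 2) powr e"
    using assms by (simp add: powr_mult)
  also have "(N powr 2) powr e = N powr (2*e)" by (simp add: powr_powr)
  finally show ?thesis .
qed

lemma J_large:
  fixes N w A \<alpha> :: real
  assumes N: "1 < N" and w: "1 \<le> w" and A1: "2*N/w \<le> A" and A2: "A \<le> 2*N" and al: "0 < \<alpha>" "\<alpha> < 1"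
  shows "2 * (1 + 2*A*N) powr (1-\<alpha>) / ((1-\<alpha>) * A) + 2*N * (1 + 2*A*N) powr (-\<alpha>)
    \<le> (w * 5 powr (1-\<alpha>) / (1-\<alpha>) + 2 * (4/w) powr (-\<alpha>)) * N powr (1 - 2*\<alpha>)"
proof -
  have Apos: "0 < A" using A1 N w by (smt (verit) divide_pos_pos)
  have "(1 + 2*A*N) powr (1-\<alpha>) \<le> (5 * N\<^sup>2) powr (1-\<alpha>)"
  proof (intro powr_mono2)
    have "2*A*N \<le> 4 * N\<^sup>2" using A2 N by (simp add: power2_eq_square mult_right_mono)
    moreover have "1 \<le> N\<^sup>2" using N by (simp add: one_le_power)
    ultimately show "1 + 2*A*N \<le> 5 * N\<^sup>2" by linarith
  qed (use al Apos N in auto)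
  also have "\<dots> = 5 powr (1-\<alpha>) * N powr (2 - 2*\<alpha>)"
    using N powr_sq_helper[of 5 N "1-\<alpha>"] by (simp add: algebra_simps)
  finally have T1a: "(1 + 2*A*N) powr (1-\<alpha>) \<le> 5 powr (1-\<alpha>) * N powr (2 - 2*\<alpha>)" .
  have iA: "1 / A \<le> w / (2*N)" using A1 Apos N w by (simp add: field_simps)
  have "2 * (1 + 2*A*N) powr (1-\<alpha>) / ((1-\<alpha>) * A) = (2 / (1-\<alpha>)) * (1 + 2*A*N) powr (1-\<alpha>) * (1/A)"
    by simp
  also have "\<dots> \<le> (2 / (1-\<alpha>)) * (5 powr (1-\<alpha>) * N powr (2 - 2*\<alpha>)) * (w / (2*N))"
    using T1a iA al Apos by (intro mult_mono) auto
  also have "\<dots> = w * 5 powr (1-\<alpha>) / (1-\<alpha>) * (N powr (2 - 2*\<alpha>) / N)"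
    using N al by simp
  also have "N powr (2 - 2*\<alpha>) / N = N powr (1 - 2*\<alpha>)"
    using N powr_diff[of N "2 - 2*\<alpha>" 1] by simp
  finally have T1: "2 * (1 + 2*A*N) powr (1-\<alpha>) / ((1-\<alpha>) * A) \<le> w * 5 powr (1-\<alpha>) / (1-\<alpha>) * N powr (1 - 2*\<alpha>)" .
  have "(1 + 2*A*N) powr (-\<alpha>) \<le> (4/w * N\<^sup>2) powr (-\<alpha>)"
  proof (intro powr_mono2')
    have "2 * (2*N/w) * N \<le> 2*A*N" using A1 N by (intro mult_right_mono) auto
    then show "4/w * N\<^sup>2 \<le> 1 + 2*A*N" by (simp add: power2_eq_square field_simps)
  qed (use al N w in auto)
  also have "\<dots> = (4/w) powr (-\<alpha>) * N powr (-2*\<alpha>)"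
    using N w powr_sq_helper[of "4/w" N "-\<alpha>"] by simp
  finally have "2*N * (1 + 2*A*N) powr (-\<alpha>) \<le> 2*N * ((4/w) powr (-\<alpha>) * N powr (-2*\<alpha>))"
    using N by (intro mult_left_mono) auto
  also have "\<dots> = 2 * (4/w) powr (-\<alpha>) * (N powr 1 * N powr (-2*\<alpha>))" using N by simp
  also have "N powr 1 * N powr (-2*\<alpha>) = N powr (1 - 2*\<alpha>)" using powr_add[of N 1 "-2*\<alpha>"] by simp
  finally have T2: "2*N * (1 + 2*A*N) powr (-\<alpha>) \<le> 2 * (4/w) powr (-\<alpha>) * N powr (1 - 2*\<alpha>)" .
  show ?thesis using T1 T2 by (simp add: algebra_simps)
qed



lemma coord_lower:
  fixes \<xi> k :: "'a::euclidean_space"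
  assumes k: "k \<in> Basis" and kmax: "\<And>b. b \<in> Basis \<Longrightarrow> \<bar>\<xi> \<bullet> b\<bar> \<le> \<bar>\<xi> \<bullet> k\<bar>"
  shows "norm \<xi> \<le> sqrt (real DIM('a)) * \<bar>\<xi> \<bullet> k\<bar>"
proof -
  have "(norm \<xi>)\<^sup>2 = (\<Sum>b\<in>Basis. (\<xi> \<bullet> b) * (\<xi> \<bullet> b))"
    by (simp add: power2_norm_eq_inner euclidean_inner[of \<xi> \<xi>])
  also have "\<dots> \<le> (\<Sum>b\<in>(Basis::'a set). (\<xi> \<bullet> k) * (\<xi> \<bullet> k))"
  proof (intro sum_mono)
    fix b :: 'a assume "b \<in> Basis"
    then have "\<bar>\<xi> \<bullet> b\<bar> * \<bar>\<xi> \<bullet> b\<bar> \<le> \<bar>\<xi> \<bullet> k\<bar> * \<bar>\<xi> \<bullet> k\<bar>" using kmax by (intro mult_mono) auto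
    then show "(\<xi> \<bullet> b) * (\<xi> \<bullet> b) \<le> (\<xi> \<bullet> k) * (\<xi> \<bullet> k)" by (simp add: abs_mult[symmetric])
  qed
  also have "\<dots> = (sqrt (real DIM('a)) * \<bar>\<xi> \<bullet> k\<bar>)\<^sup>2"
  proof -
    have "(sqrt (real DIM('a)) * \<bar>\<xi> \<bullet> k\<bar>)\<^sup>2 = (sqrt (real DIM('a)))\<^sup>2 * \<bar>\<xi> \<bullet> k\<bar>\<^sup>2"
      by (rule power_mult_distrib)
    then show ?thesis by (simp add: power2_eq_square)
  qed
  finally show ?thesis
    by (rule power2_le_imp_le) simp
qed

theorem lemma6p2:
  fixes s b' :: real
  assumes "CARD('n::finite) \<ge> 2"
    and "s > real CARD('n) / 2 - 1"
    and "max (3/8) (real CARD('n) / 8 + 1/4 - s / 4) < b'"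
    and "b' < 1/2"
  shows "\<exists>C::real. \<forall>(\<xi>::real ^ 'n) (\<tau>::real). Theta1 s b' \<xi> \<tau> \<le> ennreal C"
proof -
  define n where "n = CARD('n) - 1"
  define d where "d = real CARD('n)"
  have d2: "2 \<le> d" using assms(1) by (simp add: d_def)
  have nd: "real n = d - 1" using assms(1) by (simp add: n_def d_def of_nat_diff)
  have DIMn: "DIM(real^'n) - 1 = n" by (simp add: n_def)
  have s0: "0 < s" using assms(2) d2 by (simp add: d_def)
  have b1: "3/8 < b'" and b2: "d/8 + 1/4 - s/4 < b'" using assms(3) by (auto simp: d_def)
  define \<beta> where "\<beta> = 2*b'"
  define m where "m = min (8*b' - 3) (8*b' - 2 - d + 2 * s)"
  have m: "0 < m" using b1 b2 by (simp add: m_def)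
  define \<epsilon> where "\<epsilon> = m/4"
  define \<alpha> where "\<alpha> = 2*\<beta> - 1 - \<epsilon>"
  define p where "p = 2 * s/(d-1)"
  define q where "q = max (1-p) 0 + m/(2*(d-1))"
  have ep: "0 < \<epsilon>" using m by (simp add: \<epsilon>_def)
  have m1: "m \<le> 8*b' - 3" and m2: "m \<le> 8*b' - 2 - d + 2 * s" by (auto simp: m_def)
  have al0: "0 < \<alpha>" using m1 b1 by (simp add: \<alpha>_def \<epsilon>_def \<beta>_def)
  have al1: "\<alpha> < 1" using assms(4) ep by (simp add: \<alpha>_def \<beta>_def)
  have be: "\<beta> < 1 + \<epsilon>" using assms(4) ep by (simp add: \<beta>_def)
  have p0: "0 \<le> p" using s0 d2 by (simp add: p_def)
  have ps: "p * (d - 1) = 2 * s" using d2 by (simp add: p_def)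
  have q0: "0 < q"
  proof -
    have "0 < m/(2*(d-1))" using m d2 by (intro divide_pos_pos) auto
    moreover have "0 \<le> max (1-p) 0" by simp
    ultimately show ?thesis unfolding q_def by linarith
  qed
  have q1: "1 - p \<le> q"
  proof -
    have "0 < m/(2*(d-1))" using m d2 by (intro divide_pos_pos) auto
    moreover have "1 - p \<le> max (1-p) 0" by simp
    ultimately show ?thesis unfolding q_def by linarith
  qed
  have ex: "1 - 2*\<alpha> + q * real n \<le> 0"
  proof -
    have "q * real n = max (1-p) 0 * (d-1) + m/2" using d2 by (simp add: q_def nd field_simps)
    also have "max (1-p) 0 * (d-1) = max (d - 1 - 2 * s) 0"
    proof -
      have e: "(1-p)*(d-1) = d - 1 - 2 * s" using ps by (simp add: algebra_simps)
      show ?thesis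
      proof (cases "0 \<le> 1-p")
        case True
        then have "0 \<le> (1-p)*(d-1)" using d2 by simp
        then have "max (d - 1 - 2 * s) 0 = d - 1 - 2 * s" using e by simp
        moreover have "max (1-p) 0 = 1 - p" using True by simp
        ultimately show ?thesis using e by simp
      next
        case False
        then have "(1-p)*(d-1) < 0" using d2 by (simp add: mult_neg_pos)
        then have "max (d - 1 - 2 * s) 0 = 0" using e by simp
        moreover have "max (1-p) 0 = 0" using False by simp
        ultimately show ?thesis by simp
      qed
    qed
    finally show ?thesis using m1 m2 by (auto simp: \<alpha>_def \<beta>_def \<epsilon>_def max_def)
  qed
  define K0 where "K0 = 2 powr \<alpha> * (4/\<epsilon>)"
  have K0: "0 \<le> K0" using ep by (simp add: K0_def)
  define CJ where "CJ = sqrt d * 5 powr (1-\<alpha>)/(1-\<alpha>) + 2*(4/sqrt d) powr (-\<alpha>)"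
  have CJ: "0 \<le> CJ" using al1 d2 by (simp add: CJ_def)
  define C where "C = K0 * (max 2 CJ * (2 * 2 powr q / q) ^ n)"
  show ?thesis
  proof (intro exI allI)
    fix \<xi> :: "real^'n" and \<tau> :: real
    define N where "N = norm \<xi>"
    have N0: "0 \<le> N" by (simp add: N_def)
    obtain k :: "real^'n" where k: "k \<in> Basis" and kmax: "\<And>b. b \<in> Basis \<Longrightarrow> \<bar>\<xi> \<bullet> b\<bar> \<le> \<bar>\<xi> \<bullet> k\<bar>"
    proof -
      have "\<exists>k\<in>(Basis::(real^'n) set). \<forall>b\<in>Basis. \<bar>\<xi> \<bullet> b\<bar> \<le> \<bar>\<xi> \<bullet> k\<bar>"
      proof -
        let ?f = "\<lambda>b::real^'n. \<bar>\<xi> \<bullet> b\<bar>"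
        have "Max (?f ` Basis) \<in> ?f ` Basis" by (rule Max_in) auto
        then obtain k where "k \<in> Basis" "Max (?f ` Basis) = ?f k" by blast
        moreover have "?f b \<le> Max (?f ` Basis)" if "b \<in> Basis" for b using that by (intro Max_ge) auto
        ultimately show ?thesis by metis
      qed
      then show ?thesis using that by blast
    qed
    have kle: "\<bar>\<xi> \<bullet> k\<bar> \<le> N" using Basis_le_norm[OF k] by (simp add: N_def)
    have kge: "N \<le> sqrt d * \<bar>\<xi> \<bullet> k\<bar>" using coord_lower[OF k kmax] by (simp add: N_def d_def)
    define c0 where "c0 = \<tau> + N\<^sup>2"
    define X where "X = (\<lambda>\<zeta>::real^'n. indicator {\<zeta>'. norm \<zeta>' \<le> norm \<xi>} \<zeta> * (1 + norm \<zeta>) powr (- 2 * s))"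
    have X0: "0 \<le> X \<zeta>" for \<zeta> by (simp add: X_def)
    have A: "Theta1 s b' \<xi> \<tau> \<le> (\<integral>\<^sup>+\<zeta>. ennreal (K0 * (X \<zeta> * (1 + \<bar>c0 + 2 * (\<xi> \<bullet> \<zeta>)\<bar>) powr (-\<alpha>))) \<partial>lborel)"
    proof -
      let ?F = "\<lambda>p. case p of (\<zeta>, \<tau>\<^sub>1) \<Rightarrow>
        ennreal (indicator {\<zeta>'. norm \<zeta>' \<le> norm \<xi>} \<zeta> * (1 + norm \<zeta>) powr (- 2 * s)
          / ((1 + \<bar>\<tau>\<^sub>1 + (norm \<zeta>)\<^sup>2\<bar>) powr (2 * b')
             * (1 + \<bar>\<tau> + \<tau>\<^sub>1 + (norm (\<xi> + \<zeta>))\<^sup>2\<bar>) powr (2 * b')))"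
      have mF: "?F \<in> borel_measurable (lborel \<Otimes>\<^sub>M lborel)" by (rule meas_test)
      have "Theta1 s b' \<xi> \<tau> = integral\<^sup>N (lborel \<Otimes>\<^sub>M lborel) ?F"
        unfolding Theta1_def lborel_prod ..
      also have "\<dots> = (\<integral>\<^sup>+\<zeta>. (\<integral>\<^sup>+t. ?F (\<zeta>, t) \<partial>lborel) \<partial>lborel)"
        by (rule sigma_finite_measure.nn_integral_fst[OF sigma_finite_lborel mF, symmetric])
      also have "\<dots> \<le> (\<integral>\<^sup>+\<zeta>. ennreal (K0 * (X \<zeta> * (1 + \<bar>c0 + 2 * (\<xi> \<bullet> \<zeta>)\<bar>) powr (-\<alpha>))) \<partial>lborel)"
      proof (intro nn_integral_mono)
        fix \<zeta> :: "real^'n"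
        have "(\<integral>\<^sup>+t. ?F (\<zeta>, t) \<partial>lborel) = (\<integral>\<^sup>+t. ennreal (X \<zeta> / ((1 + \<bar>t + (norm \<zeta>)\<^sup>2\<bar>) powr \<beta> * (1 + \<bar>t + (\<tau> + (norm (\<xi> + \<zeta>))\<^sup>2)\<bar>) powr \<beta>)) \<partial>lborel)"
          by (intro nn_integral_cong) (simp add: X_def \<beta>_def add_ac)
        also have "\<dots> \<le> ennreal (X \<zeta> * 2 powr \<alpha> * (1 + \<bar>(norm \<zeta>)\<^sup>2 - (\<tau> + (norm (\<xi> + \<zeta>))\<^sup>2)\<bar>) powr (-\<alpha>) * (4/\<epsilon>))"
          by (rule int_tau[OF X0 _ _ be ep]) (use al0 in \<open>auto simp: \<alpha>_def\<close>)
        also have "\<dots> = ennreal (K0 * (X \<zeta> * (1 + \<bar>c0 + 2 * (\<xi> \<bullet> \<zeta>)\<bar>) powr (-\<alpha>)))"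
        proof -
          have "(norm (\<xi> + \<zeta>))\<^sup>2 = N\<^sup>2 + 2 * (\<xi> \<bullet> \<zeta>) + (norm \<zeta>)\<^sup>2"
            by (simp add: N_def power2_norm_eq_inner inner_add_left inner_add_right inner_commute)
          then have "\<bar>(norm \<zeta>)\<^sup>2 - (\<tau> + (norm (\<xi> + \<zeta>))\<^sup>2)\<bar> = \<bar>c0 + 2 * (\<xi> \<bullet> \<zeta>)\<bar>"
            by (simp add: c0_def)
          then show ?thesis by (simp add: K0_def algebra_simps)
        qed
        finally show "(\<integral>\<^sup>+t. ?F (\<zeta>, t) \<partial>lborel) \<le> ennreal (K0 * (X \<zeta> * (1 + \<bar>c0 + 2 * (\<xi> \<bullet> \<zeta>)\<bar>) powr (-\<alpha>)))" .
      qed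
      finally show ?thesis .
    qed
    define J where "J = (if N \<le> 1 then 2 * N else 2 * (1 + 2*\<bar>2*(\<xi> \<bullet> k)\<bar>*N) powr (1-\<alpha>) / ((1-\<alpha>) * \<bar>2*(\<xi> \<bullet> k)\<bar>) + 2*N * (1 + 2*\<bar>2*(\<xi> \<bullet> k)\<bar>*N) powr (-\<alpha>))"
    define Q where "Q = 2 * (1+N) powr q / q"
    have Jint: "(\<integral>\<^sup>+y. ennreal ((1 + \<bar>c + 2*(\<xi> \<bullet> k) * y\<bar>) powr (-\<alpha>)) * indicator {-N..N} y \<partial>lborel) \<le> ennreal J" for c
    proof (cases "N \<le> 1")
      case True
      have "(\<integral>\<^sup>+y. ennreal ((1 + \<bar>c + 2*(\<xi> \<bullet> k) * y\<bar>) powr (-\<alpha>)) * indicator {-N..N} y \<partial>lborel)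
          \<le> (\<integral>\<^sup>+y. indicator {-N..N} y \<partial>lborel)"
      proof (intro nn_integral_mono)
        fix y :: real
        have "(1 + \<bar>c + 2*(\<xi> \<bullet> k) * y\<bar>) powr (-\<alpha>) \<le> (1 + \<bar>c + 2*(\<xi> \<bullet> k) * y\<bar>) powr 0"
          using al0 by (intro powr_mono) auto
        moreover have "1 + \<bar>c + 2*(\<xi> \<bullet> k) * y\<bar> \<noteq> 0" using abs_ge_zero[of "c + 2*(\<xi> \<bullet> k) * y"] by linarith
        ultimately have "(1 + \<bar>c + 2*(\<xi> \<bullet> k) * y\<bar>) powr (-\<alpha>) \<le> 1" by simp
        then show "ennreal ((1 + \<bar>c + 2*(\<xi> \<bullet> k) * y\<bar>) powr (-\<alpha>)) * indicator {-N..N} y \<le> indicator {-N..N} y"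
          by (auto split: split_indicator intro: ennreal_leI)
      qed
      also have "\<dots> = ennreal (2 * N)" using N0 by simp
      finally show ?thesis using True by (simp add: J_def)
    next
      case False
      then have N1: "1 < N" by simp
      then have "\<xi> \<bullet> k \<noteq> 0" using kge by auto
      then have "2*(\<xi> \<bullet> k) \<noteq> 0" by simp
      from int_coupling[OF this N0 al0 al1, of c] False show ?thesis by (simp add: J_def)
    qed
    have Qint: "(\<integral>\<^sup>+y. ennreal ((1 + \<bar>y\<bar>) powr (-p)) * indicator {-N..N} y \<partial>lborel) \<le> ennreal Q"
      unfolding Q_def by (rule int_Icc_sym[OF q0 q1 N0])
    have B: "(\<integral>\<^sup>+\<zeta>. ennreal (indicator {\<zeta>. norm \<zeta> \<le> N} \<zeta> * (1 + norm \<zeta>) powr (- 2 * s) * (1 + \<bar>c0 + 2 * (\<xi> \<bullet> \<zeta>)\<bar>) powr (-\<alpha>)) \<partial>lborel)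
       \<le> ennreal J * ennreal Q ^ n"
      using int_zeta[OF k p0 _ Jint Qint, of s c0] ps DIMn by (simp add: d_def)
    have J0: "0 \<le> J" using al1 N0 by (simp add: J_def)
    have J1: "J \<le> 2" if "N \<le> 1" using that by (simp add: J_def)
    have J2: "J \<le> CJ * N powr (1 - 2*\<alpha>)" if N1: "1 < N"
    proof -
      have "J = 2 * (1 + 2*\<bar>2*(\<xi> \<bullet> k)\<bar>*N) powr (1-\<alpha>) / ((1-\<alpha>) * \<bar>2*(\<xi> \<bullet> k)\<bar>) + 2*N * (1 + 2*\<bar>2*(\<xi> \<bullet> k)\<bar>*N) powr (-\<alpha>)"
        using N1 by (simp add: J_def)
      also have "\<dots> \<le> CJ * N powr (1 - 2*\<alpha>)"
        unfolding CJ_def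
      proof (rule J_large[OF N1 _ _ _ al0 al1])
        show "1 \<le> sqrt d" using d2 by simp
        show "2 * N / sqrt d \<le> \<bar>2 * (\<xi> \<bullet> k)\<bar>" using kge d2 by (simp add: field_simps)
        show "\<bar>2 * (\<xi> \<bullet> k)\<bar> \<le> 2 * N" using kle by simp
      qed
      finally show ?thesis .
    qed
    have JQ: "J * Q ^ n \<le> max 2 CJ * (2 * 2 powr q / q) ^ n"
      unfolding Q_def by (rule JQ_bound[OF N0 q0 CJ J1 J2 J0 ex])
    have "Theta1 s b' \<xi> \<tau> \<le> ennreal K0 * (\<integral>\<^sup>+\<zeta>. ennreal (indicator {\<zeta>. norm \<zeta> \<le> N} \<zeta> * (1 + norm \<zeta>) powr (- 2 * s) * (1 + \<bar>c0 + 2 * (\<xi> \<bullet> \<zeta>)\<bar>) powr (-\<alpha>)) \<partial>lborel)"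
    proof -
      have "(\<integral>\<^sup>+\<zeta>. ennreal (K0 * (X \<zeta> * (1 + \<bar>c0 + 2 * (\<xi> \<bullet> \<zeta>)\<bar>) powr (-\<alpha>))) \<partial>lborel)
          = (\<integral>\<^sup>+\<zeta>. ennreal K0 * ennreal (indicator {\<zeta>. norm \<zeta> \<le> N} \<zeta> * (1 + norm \<zeta>) powr (- 2 * s) * (1 + \<bar>c0 + 2 * (\<xi> \<bullet> \<zeta>)\<bar>) powr (-\<alpha>)) \<partial>lborel)"
        using K0 by (intro nn_integral_cong) (simp add: X_def N_def ennreal_mult[symmetric] mult.assoc)
      also have "\<dots> = ennreal K0 * (\<integral>\<^sup>+\<zeta>. ennreal (indicator {\<zeta>. norm \<zeta> \<le> N} \<zeta> * (1 + norm \<zeta>) powr (- 2 * s) * (1 + \<bar>c0 + 2 * (\<xi> \<bullet> \<zeta>)\<bar>) powr (-\<alpha>)) \<partial>lborel)"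
        by (rule nn_integral_cmult) measurable
      finally show ?thesis using A by simp
    qed
    also have "\<dots> \<le> ennreal K0 * (ennreal J * ennreal Q ^ n)"
      by (intro mult_left_mono B) simp
    also have "\<dots> = ennreal (K0 * (J * Q ^ n))"
      using K0 J0 q0 by (simp add: ennreal_mult ennreal_power Q_def)
    also have "\<dots> \<le> ennreal C"
      unfolding C_def using JQ K0 by (intro ennreal_leI mult_left_mono) auto
    finally show "Theta1 s b' \<xi> \<tau> \<le> ennreal C" .
  qed
qed


end
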